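(* Let $\Gamma$ be a distance-regular graph with diameter $D\ge3$ and valency $k$. Let $\theta,\theta'$ be real numbers other than $k$ that form a tight pair. Then $$\Bigl(\theta+\frac{k}{a_1+1}\Bigr)\Bigl(\theta'+\frac{k}{a_1+1}\Bigr)=-\frac{k a_1 b_1}{(a_1+1)^2}.$$
   Context: $\Gamma$ is a finite connected undirected graph without loops or multiple edges, distance-regular with diameter $D$, intersection numbers $a_i,b_i,c_i$ ($c_0=0$, $b_D=0$), valency $k$, $c_i+a_i+b_i=k$. For $\theta\in\mathbb{R}$ the pseudo cosine sequence for $\theta$ is the sequence of reals $\sigma_0,\dots,\sigma_D$ with $\sigma_0=1$ and $c_i\sigma_{i-1}+a_i\sigma_i+b_i\sigma_{i+1}=\theta\sigma_i$ for $0\le i\le D-1$. Pseudo cosine sequences $\sigma_i$, $\rho_i$ form a tight pair if $(\sigma_i\rho_i)_{i=0}^D$ is a pseudo cosine sequence; reals $\theta,\theta'$ form a tight pair if their pseudo cosine sequences do. *)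

theory Defs
  imports Main "HOL.Real"
begin

definition adj_rel :: "'a set \<Rightarrow> ('a \<Rightarrow> 'a \<Rightarrow> bool) \<Rightarrow> ('a \<times> 'a) set" where
  "adj_rel V E = {(x, y). x \<in> V \<and> y \<in> V \<and> E x y}"

definition gdist :: "'a set \<Rightarrow> ('a \<Rightarrow> 'a \<Rightarrow> bool) \<Rightarrow> 'a \<Rightarrow> 'a \<Rightarrow> nat" where
  "gdist V E x y = (LEAST n. (x, y) \<in> adj_rel V E ^^ n)"

definition simple_graph :: "'a set \<Rightarrow> ('a \<Rightarrow> 'a \<Rightarrow> bool) \<Rightarrow> bool" where
  "simple_graph V E \<longleftrightarrow> finite V \<and> V \<noteq> {} \<and>
     (\<forall>x\<in>V. \<forall>y\<in>V. E x y \<longleftrightarrow> E y x) \<and> (\<forall>x\<in>V. \<not> E x x)"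

definition connected_graph :: "'a set \<Rightarrow> ('a \<Rightarrow> 'a \<Rightarrow> bool) \<Rightarrow> bool" where
  "connected_graph V E \<longleftrightarrow> (\<forall>x\<in>V. \<forall>y\<in>V. \<exists>n. (x, y) \<in> adj_rel V E ^^ n)"

definition diameter :: "'a set \<Rightarrow> ('a \<Rightarrow> 'a \<Rightarrow> bool) \<Rightarrow> nat" where
  "diameter V E = Max {gdist V E x y | x y. x \<in> V \<and> y \<in> V}"

text \<open>a, b, c are intersection numbers of the graph: for all x, y at distance i,
  c i = |Gamma_{i-1}(x) \<inter> Gamma(y)|, a i = |Gamma_i(x) \<inter> Gamma(y)|,
  b i = |Gamma_{i+1}(x) \<inter> Gamma(y)| (so c 0 = 0 automatically).\<close>
definition intersection_numbers ::
  "'a set \<Rightarrow> ('a \<Rightarrow> 'a \<Rightarrow> bool) \<Rightarrow> (nat \<Rightarrow> nat) \<Rightarrow> (nat \<Rightarrow> nat) \<Rightarrow> (nat \<Rightarrow> nat) \<Rightarrow> bool" where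
  "intersection_numbers V E a b c \<longleftrightarrow>
     (\<forall>x\<in>V. \<forall>y\<in>V.
        c (gdist V E x y) = card {z\<in>V. E y z \<and> gdist V E x z + 1 = gdist V E x y} \<and>
        a (gdist V E x y) = card {z\<in>V. E y z \<and> gdist V E x z = gdist V E x y} \<and>
        b (gdist V E x y) = card {z\<in>V. E y z \<and> gdist V E x z = gdist V E x y + 1})"

definition distance_regular :: "'a set \<Rightarrow> ('a \<Rightarrow> 'a \<Rightarrow> bool) \<Rightarrow> bool" where
  "distance_regular V E \<longleftrightarrow> simple_graph V E \<and> connected_graph V E \<and>
     (\<exists>a b c. intersection_numbers V E a b c)"

text \<open>Pseudo cosine sequence for theta (only the values at 0..D matter).\<close>
definition pseudo_cosine ::
  "(nat \<Rightarrow> nat) \<Rightarrow> (nat \<Rightarrow> nat) \<Rightarrow> (nat \<Rightarrow> nat) \<Rightarrow> nat \<Rightarrow> real \<Rightarrow> (nat \<Rightarrow> real) \<Rightarrow> bool" where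
  "pseudo_cosine a b c D \<theta> \<sigma> \<longleftrightarrow> \<sigma> 0 = 1 \<and>
     (\<forall>i<D. real (c i) * (if i = 0 then 0 else \<sigma> (i - 1)) + real (a i) * \<sigma> i
              + real (b i) * \<sigma> (Suc i) = \<theta> * \<sigma> i)"

definition tight_pair_seq ::
  "(nat \<Rightarrow> nat) \<Rightarrow> (nat \<Rightarrow> nat) \<Rightarrow> (nat \<Rightarrow> nat) \<Rightarrow> nat \<Rightarrow> (nat \<Rightarrow> real) \<Rightarrow> (nat \<Rightarrow> real) \<Rightarrow> bool" where
  "tight_pair_seq a b c D \<sigma> \<rho> \<longleftrightarrow>
     (\<exists>\<eta>. pseudo_cosine a b c D \<eta> (\<lambda>i. \<sigma> i * \<rho> i))"

definition tight_pair ::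
  "(nat \<Rightarrow> nat) \<Rightarrow> (nat \<Rightarrow> nat) \<Rightarrow> (nat \<Rightarrow> nat) \<Rightarrow> nat \<Rightarrow> real \<Rightarrow> real \<Rightarrow> bool" where
  "tight_pair a b c D \<theta> \<theta>' \<longleftrightarrow>
     (\<exists>\<sigma> \<rho>. pseudo_cosine a b c D \<theta> \<sigma> \<and> pseudo_cosine a b c D \<theta>' \<rho> \<and>
             tight_pair_seq a b c D \<sigma> \<rho>)"

end

theory Submission
  imports Defs
begin

lemma gdist_edge:
  assumes "x \<in> V" "y \<in> V" "E x y" "x \<noteq> y"
  shows "gdist V E x y = 1"
proof -
  have "(x, y) \<in> adj_rel V E ^^ 1" using assms by (simp add: adj_rel_def)
  moreover have "(x, y) \<notin> adj_rel V E ^^ 0" using assms by simp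
  ultimately show ?thesis unfolding gdist_def
    by (metis (mono_tags, lifting) Least_equality One_nat_def less_one linorder_not_le)
qed

lemma gdist_self: "gdist V E x x = 0"
  unfolding gdist_def by (rule Least_equality) auto

lemma gdist_two:
  assumes "x \<in> V" "y \<in> V" "z \<in> V" "E x y" "E y z"
  shows "gdist V E x z \<le> 2" and "(x, z) \<in> adj_rel V E ^^ gdist V E x z"
proof -
  have "(x, z) \<in> adj_rel V E ^^ 2" using assms
    by (auto simp add: adj_rel_def numeral_2_eq_2 relcomp_unfold)
  thus "gdist V E x z \<le> 2" "(x, z) \<in> adj_rel V E ^^ gdist V E x z"
    unfolding gdist_def by (auto intro: Least_le LeastI)
qed

lemma alg1: "(B::real)*K^3 + A*B*K*(K*s)*(K*r) + K*((K*s)^2-A*(K*s)-K)*((K*r)^2-A*(K*r)-K) - B*(K*s)^2*(K*r)^2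
  = K^3 * ((B * (1 + A * (s*r)) + ((K*s) * s - 1 - A * s) * ((K*r) * r - 1 - A * r)) - B * ((K*s*r) * (s*r)))"
  by algebra

lemma alg2: "(A+1)*((B::real)*K^3 + A*B*K*t*u + K*(t^2-A*t-K)*(u^2-A*u-K) - B*t^2*u^2)
     = (t-K)*(u-K)*((A+1)^2*t*u + K*(A+1)*(t+u) + K*(K+A*B))" if "B = K - A - 1"
  unfolding that by algebra

lemma alg3: "(t + K / (A + 1)) * (u + K / (A + 1)) = - (K * A * B) / (A + 1)^2"
  if "(A+1)^2*t*u + K*(A+1)*(t+u) + K*(K+A*B) = 0" "(A::real) + 1 \<noteq> 0"
proof -
  have "(t + K / (A + 1)) * (u + K / (A + 1)) = ((A+1)^2*t*u + K*(A+1)*(t+u) + K*K) / (A+1)^2"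
    using that(2) by (simp add: field_simps power2_eq_square)
  moreover have "(A+1)^2*t*u + K*(A+1)*(t+u) + K*K = - (K * A * B)" using that(1) by algebra
  ultimately show ?thesis by simp
qed

theorem lemma4p4:
  fixes V :: "'v set" and E :: "'v \<Rightarrow> 'v \<Rightarrow> bool"
    and a b c :: "nat \<Rightarrow> nat" and D k :: nat and \<theta> \<theta>' :: real
  assumes "distance_regular V E"
    and "intersection_numbers V E a b c"
    and "D = diameter V E" and "D \<ge> 3"
    and "\<forall>x\<in>V. card {y\<in>V. E x y} = k"
    and "\<theta> \<noteq> real k" and "\<theta>' \<noteq> real k"
    and "tight_pair a b c D \<theta> \<theta>'"
  shows "(\<theta> + real k / (real (a 1) + 1)) * (\<theta>' + real k / (real (a 1) + 1))
           = - (real k * real (a 1) * real (b 1)) / (real (a 1) + 1)^2"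
proof -
  have sg: "simple_graph V E" using assms(1) by (simp add: distance_regular_def)
  hence fin: "finite V" and ne: "V \<noteq> {}" and sym: "\<forall>x\<in>V. \<forall>y\<in>V. E x y \<longleftrightarrow> E y x"
    and irr: "\<forall>x\<in>V. \<not> E x x" by (auto simp: simple_graph_def)
  have IN: "\<And>x y. x \<in> V \<Longrightarrow> y \<in> V \<Longrightarrow>
        c (gdist V E x y) = card {z\<in>V. E y z \<and> gdist V E x z + 1 = gdist V E x y} \<and>
        a (gdist V E x y) = card {z\<in>V. E y z \<and> gdist V E x z = gdist V E x y} \<and>
        b (gdist V E x y) = card {z\<in>V. E y z \<and> gdist V E x z = gdist V E x y + 1}"
    using assms(2) unfolding intersection_numbers_def by blast
  obtain x0 where x0: "x0 \<in> V" using ne by auto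
  have nb: "{z\<in>V. E x0 z \<and> gdist V E x0 z = 1} = {z\<in>V. E x0 z}"
    using gdist_edge[of x0 V _ E] x0 irr by auto
  have nb0: "{z\<in>V. E x0 z \<and> gdist V E x0 z = 0} = {}"
    using gdist_edge[of x0 V _ E] x0 irr by (metis (mono_tags, lifting) empty_Collect_eq zero_neq_one)
  have b0: "b 0 = k" using IN[OF x0 x0] nb assms(5) x0 by (simp add: gdist_self)
  have a0: "a 0 = 0" using IN[OF x0 x0] nb0 by (simp add: gdist_self)
  obtain \<sigma> \<rho> \<eta> where ps: "pseudo_cosine a b c D \<theta> \<sigma>" and pr: "pseudo_cosine a b c D \<theta>' \<rho>"
    and pt: "pseudo_cosine a b c D \<eta> (\<lambda>i. \<sigma> i * \<rho> i)"
    using assms(8) unfolding tight_pair_def tight_pair_seq_def by blast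
  have s0: "real k * \<sigma> 1 = \<theta>" using ps assms(4) a0 b0 unfolding pseudo_cosine_def
    by (auto dest!: spec[of _ 0])
  have r0: "real k * \<rho> 1 = \<theta>'" using pr assms(4) a0 b0 unfolding pseudo_cosine_def
    by (auto dest!: spec[of _ 0])
  have t0: "real k * (\<sigma> 1 * \<rho> 1) = \<eta>" using pt assms(4) a0 b0 unfolding pseudo_cosine_def
    by (auto dest!: spec[of _ 0])
  have k0: "k \<noteq> 0" using s0 assms(6) by auto
  have "{z\<in>V. E x0 z} \<noteq> {}" using k0 assms(5) x0 by fastforce
  then obtain y0 where y0: "y0 \<in> V" "E x0 y0" by auto
  have xy: "x0 \<noteq> y0" using irr x0 y0 by auto
  have d1: "gdist V E x0 y0 = 1" using gdist_edge[of x0 V y0 E, OF x0 y0(1) y0(2) xy] .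
  let ?A = "{z\<in>V. E y0 z \<and> gdist V E x0 z + 1 = 1}"
  let ?B = "{z\<in>V. E y0 z \<and> gdist V E x0 z = 1}"
  let ?C = "{z\<in>V. E y0 z \<and> gdist V E x0 z = 1 + 1}"
  have A: "?A = {x0}"
  proof
    show "?A \<subseteq> {x0}"
    proof
      fix z assume z: "z \<in> ?A"
      have "(x0, z) \<in> adj_rel V E ^^ gdist V E x0 z" using z gdist_two(2)[of x0 V y0 _ E, OF x0 y0(1) _ y0(2)] by blast
      moreover have "gdist V E x0 z = 0" using z by simp
      ultimately show "z \<in> {x0}" by simp
    qed
    show "{x0} \<subseteq> ?A" using x0 y0 sym by (auto simp: gdist_self)
  qed
  have c1: "c 1 = 1" using IN[OF x0 y0(1)] d1 A by simp
  have ABC: "{z\<in>V. E y0 z} = ?A \<union> ?B \<union> ?C"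
    using gdist_two(1)[of x0 V y0 _ E, OF x0 y0(1) _ y0(2)] by fastforce
  have "card (?A \<union> ?B \<union> ?C) = card ?A + card ?B + card ?C"
  proof -
    have f: "finite ?A" "finite ?B" "finite ?C" using fin by auto
    have "card (?A \<union> ?B) = card ?A + card ?B" using f by (intro card_Un_disjoint) auto
    moreover have "card (?A \<union> ?B \<union> ?C) = card (?A \<union> ?B) + card ?C" using f by (intro card_Un_disjoint) auto
    ultimately show ?thesis by simp
  qed
  moreover have "card {z\<in>V. E y0 z} = k" using assms(5) y0(1) by blast
  ultimately have "card ?A + card ?B + card ?C = k" using ABC by simp
  moreover have "c 1 = card ?A" "a 1 = card ?B" "b 1 = card ?C" using IN[OF x0 y0(1)] d1 by simp_all
  ultimately have sum: "c 1 + a 1 + b 1 = k" by simp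
  have s1: "real (c 1) + real (a 1) * \<sigma> 1 + real (b 1) * \<sigma> 2 = \<theta> * \<sigma> 1"
    using ps assms(4) unfolding pseudo_cosine_def by (auto dest!: spec[of _ 1] simp: numeral_2_eq_2)
  have r1: "real (c 1) + real (a 1) * \<rho> 1 + real (b 1) * \<rho> 2 = \<theta>' * \<rho> 1"
    using pr assms(4) unfolding pseudo_cosine_def by (auto dest!: spec[of _ 1] simp: numeral_2_eq_2)
  have t1: "real (c 1) + real (a 1) * (\<sigma> 1 * \<rho> 1) + real (b 1) * (\<sigma> 2 * \<rho> 2) = \<eta> * (\<sigma> 1 * \<rho> 1)"
    using pt assms(4) unfolding pseudo_cosine_def by (auto dest!: spec[of _ 1] simp: numeral_2_eq_2)
  define K where "K = real k"
  define A where "A = real (a 1)"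
  define B where "B = real (b 1)"
  have Kn: "K \<noteq> 0" using k0 K_def by simp
  have BK: "B = K - A - 1"
  proof -
    have "real (c 1) + real (a 1) + real (b 1) = real k" using sum by (metis of_nat_add)
    thus ?thesis using c1 unfolding K_def A_def B_def by simp
  qed
  have u: "B * \<sigma> 2 = \<theta> * \<sigma> 1 - 1 - A * \<sigma> 1" using s1 c1 A_def B_def by simp
  have v: "B * \<rho> 2 = \<theta>' * \<rho> 1 - 1 - A * \<rho> 1" using r1 c1 A_def B_def by simp
  have t1': "1 + A * (\<sigma> 1 * \<rho> 1) + B * (\<sigma> 2 * \<rho> 2) = \<eta> * (\<sigma> 1 * \<rho> 1)"
    using t1 c1 A_def B_def by simp
  have "B * (1 + A * (\<sigma> 1 * \<rho> 1)) + (B * \<sigma> 2) * (B * \<rho> 2) = B * (\<eta> * (\<sigma> 1 * \<rho> 1))"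
    using arg_cong[OF t1', of "\<lambda>x. B * x"] by (simp only: distrib_left mult_ac)
  hence X: "(B * (1 + A * (\<sigma> 1 * \<rho> 1)) + (\<theta> * \<sigma> 1 - 1 - A * \<sigma> 1) * (\<theta>' * \<rho> 1 - 1 - A * \<rho> 1))
      - B * (\<eta> * (\<sigma> 1 * \<rho> 1)) = 0" using u v by simp
  have th: "\<theta> = K * \<sigma> 1" "\<theta>' = K * \<rho> 1" "\<eta> = K * \<sigma> 1 * \<rho> 1"
    using s0 r0 t0 K_def by (auto simp add: mult.assoc)
  have EE: "B*K^3 + A*B*K*\<theta>*\<theta>' + K*(\<theta>^2-A*\<theta>-K)*(\<theta>'^2-A*\<theta>'-K) - B*\<theta>^2*\<theta>'^2 = 0"
    using alg1[of B K A "\<sigma> 1" "\<rho> 1"] X unfolding th by simp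
  have "(\<theta>-K)*(\<theta>'-K)*((A+1)^2*\<theta>*\<theta>' + K*(A+1)*(\<theta>+\<theta>') + K*(K+A*B)) = 0"
    using alg2[OF BK, of \<theta> \<theta>'] EE by simp
  hence T: "(A+1)^2*\<theta>*\<theta>' + K*(A+1)*(\<theta>+\<theta>') + K*(K+A*B) = 0"
    using assms(6,7) K_def by simp
  have A1: "A + 1 \<noteq> 0" unfolding A_def by (simp add: add_nonneg_pos)
  have "(\<theta> + K / (A + 1)) * (\<theta>' + K / (A + 1)) = - (K * A * B) / (A + 1)^2"
    using alg3[OF T A1] .
  thus ?thesis unfolding K_def A_def B_def .
qed
end
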